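(* Let $n \ge k \ge 2$ be integers, let $B^n$ be the open unit ball in $\mathbb{R}^n$, and fix $y \in B^n$. Define the vector field $W$ on $B^n \setminus \{y\}$ as follows, writing $Q(x) = \frac{1-2\langle x,y\rangle + |y|^2}{|x-y|^2}$ (note $Q(x) \geq 1$ on $B^n\setminus\{y\}$). For $k>2$, \[ W(x) = -\frac{1}{k}\big(Q(x)^{\frac{k}{2}} - 1\big)(x-y) + \frac{1}{k-2}\big(Q(x)^{\frac{k-2}{2}} - 1\big)\, y, \] and for $k=2$, \[ W(x) = -\frac{1}{2}\big(Q(x) - 1\big)(x-y) + \frac{1}{2}\log\big(Q(x)\big)\, y. \] Then for every point $x \in B^n \setminus \{y\}$ and every orthonormal $k$-frame $\{e_1,\dots,e_k\} \subset \mathbb{R}^n$, \[ \sum_{i=1}^k \langle D_{e_i} W, e_i\rangle \leq 1, \] where $D$ denotes the standard directional derivative in $\mathbb{R}^n$. *)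

theory Defs
  imports "HOL-Analysis.Analysis"
begin

definition Qfun :: "'a::euclidean_space \<Rightarrow> 'a \<Rightarrow> real" where
  "Qfun y x = (1 - 2 * (x \<bullet> y) + (norm y)\<^sup>2) / (norm (x - y))\<^sup>2"

definition Wfield :: "nat \<Rightarrow> 'a::euclidean_space \<Rightarrow> 'a \<Rightarrow> 'a" where
  "Wfield k y x =
     (if k = 2 then
        (- (1/2) * (Qfun y x - 1)) *\<^sub>R (x - y) + ((1/2) * ln (Qfun y x)) *\<^sub>R y
      else
        (- (1 / real k) * (Qfun y x powr (real k / 2) - 1)) *\<^sub>R (x - y)
        + ((1 / (real k - 2)) * (Qfun y x powr ((real k - 2) / 2) - 1)) *\<^sub>R y)"

definition dir_deriv :: "('a::real_normed_vector \<Rightarrow> 'b::real_normed_vector) \<Rightarrow> 'a \<Rightarrow> 'a \<Rightarrow> 'b" where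
  "dir_deriv W x e = vector_derivative (\<lambda>t. W (x + t *\<^sub>R e)) (at 0)"

end

theory Submission
  imports Defs
begin



lemma Q_line_eq:
  fixes y x e :: "'a::euclidean_space"
  shows "Qfun y (x + t *\<^sub>R e) = ((1 - 2*(x \<bullet> y) + (norm y)\<^sup>2) - 2*t*(e \<bullet> y))
        / ((norm (x-y))\<^sup>2 + 2*t*((x-y) \<bullet> e) + t^2 * (e \<bullet> e))"
  unfolding Qfun_def power2_norm_eq_inner
  by (simp add: inner_add_left inner_add_right inner_diff_left inner_diff_right inner_commute algebra_simps power2_eq_square)

lemma Q_line_deriv:
  fixes y x e :: "'a::euclidean_space"
  assumes "x \<noteq> y"
  shows "((\<lambda>t. Qfun y (x + t *\<^sub>R e)) has_real_derivative
           (-2 * ((e \<bullet> y) + Qfun y x * ((x-y) \<bullet> e)) / (norm (x-y))\<^sup>2)) (at 0)"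
proof -
  define N where "N = 1 - 2*(x \<bullet> y) + (norm y)\<^sup>2"
  define r where "r = (norm (x-y))\<^sup>2"
  have r: "r > 0" using assms by (simp add: r_def)
  have q: "Qfun y x = N / r" by (simp add: Qfun_def N_def r_def)
  have eq: "(\<lambda>t. Qfun y (x + t *\<^sub>R e)) = (\<lambda>t. (N - 2*t*(e \<bullet> y)) / (r + 2*t*((x-y) \<bullet> e) + t^2 * (e \<bullet> e)))"
    by (rule ext, subst Q_line_eq, simp add: N_def r_def)
  have "((\<lambda>t. (N - 2*t*(e \<bullet> y)) / (r + 2*t*((x-y) \<bullet> e) + t^2 * (e \<bullet> e))) has_real_derivative
           (-2 * ((e \<bullet> y) + (N/r) * ((x-y) \<bullet> e)) / r)) (at 0)"
    using r by (auto intro!: derivative_eq_intros simp: field_simps power2_eq_square)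
  then show ?thesis using eq q r_def by simp
qed

lemma bessel:
  fixes d :: "'a::euclidean_space" and e :: "nat \<Rightarrow> 'a"
  assumes "\<forall>i<k. \<forall>j<k. e i \<bullet> e j = (if i = j then 1 else 0)"
  shows "(\<Sum>i<k. (d \<bullet> e i)^2) \<le> d \<bullet> d"
proof -
  define p where "p = (\<Sum>i<k. (d \<bullet> e i) *\<^sub>R e i)"
  have dp: "d \<bullet> p = (\<Sum>i<k. (d \<bullet> e i)^2)"
    by (simp add: p_def inner_sum_right power2_eq_square)
  have "p \<bullet> p = (\<Sum>i<k. \<Sum>j<k. (d \<bullet> e i) * ((d \<bullet> e j) * (e j \<bullet> e i)))"
    by (simp add: p_def inner_sum_left inner_sum_right sum_distrib_left mult.assoc)
  also have "\<dots> = (\<Sum>i<k. \<Sum>j<k. if j = i then (d \<bullet> e i) * (d \<bullet> e j) else 0)"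
    by (rule sum.cong[OF refl], rule sum.cong[OF refl]) (use assms in auto)
  also have "\<dots> = (\<Sum>i<k. (d \<bullet> e i)^2)"
    by (simp add: sum.delta power2_eq_square)
  finally have pp: "p \<bullet> p = (\<Sum>i<k. (d \<bullet> e i)^2)" .
  have "0 \<le> (d - p) \<bullet> (d - p)" by simp
  also have "\<dots> = d \<bullet> d - 2 * (d \<bullet> p) + p \<bullet> p"
    by (simp add: inner_diff_left inner_diff_right inner_commute)
  finally show ?thesis using dp pp by simp
qed

lemma W_line:
  fixes y x e :: "'a::euclidean_space"
  assumes k: "2 \<le> k" and xy: "x \<noteq> y" and qpos: "Qfun y x > 0"
  shows "\<exists>V. ((\<lambda>t. Wfield k y (x + t *\<^sub>R e)) has_vector_derivative V) (at 0) \<and>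
    V \<bullet> e = -(1/real k) * (Qfun y x powr (real k/2) - 1) * (e \<bullet> e)
      - Qfun y x powr (real k/2 - 2) * ((e \<bullet> y)^2 - (Qfun y x)^2 * ((x-y) \<bullet> e)^2) / (norm (x-y))\<^sup>2"
proof -
  define q where "q = Qfun y x"
  define r where "r = (norm (x-y))\<^sup>2"
  define a where "a = e \<bullet> y"
  define b where "b = (x-y) \<bullet> e"
  define c where "c = e \<bullet> e"
  define Q' where "Q' = -2 * (a + q * b) / r"
  define P where "P = q powr (real k/2 - 2)"
  have r: "r > 0" using xy by (simp add: r_def)
  have q: "q > 0" using qpos q_def by simp
  have hQ: "((\<lambda>t. Qfun y (x + t *\<^sub>R e)) has_real_derivative Q') (at 0)"
    using Q_line_deriv[OF xy, of e] unfolding Q'_def q_def r_def a_def b_def by simp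
  have hl: "((\<lambda>t. x + t *\<^sub>R e - y) has_vector_derivative e) (at 0)"
    by (auto intro!: derivative_eq_intros)
  have hy: "((\<lambda>t. y) has_vector_derivative 0) (at 0)"
    by (rule has_vector_derivative_const)
  have Q0: "Qfun y (x + 0 *\<^sub>R e) = q" by (simp add: q_def)
  show ?thesis
  proof (cases "k = 2")
    case True
    define f1 where "f1 = (\<lambda>t. - (1/2) * (Qfun y (x + t *\<^sub>R e) - 1))"
    define f2 where "f2 = (\<lambda>t. (1/2) * ln (Qfun y (x + t *\<^sub>R e)))"
    have h1: "(f1 has_real_derivative (-(1/2) * Q')) (at 0)"
      unfolding f1_def by (auto intro!: derivative_eq_intros hQ)
    have h2: "(f2 has_real_derivative ((1/2) * (Q' / q))) (at 0)"
      unfolding f2_def using q Q0 by (auto intro!: derivative_eq_intros hQ simp: field_simps)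
    have eq: "(\<lambda>t. Wfield k y (x + t *\<^sub>R e)) = (\<lambda>t. f1 t *\<^sub>R (x + t *\<^sub>R e - y) + f2 t *\<^sub>R y)"
      using True by (simp add: Wfield_def f1_def f2_def fun_eq_iff)
    have D: "((\<lambda>t. Wfield k y (x + t *\<^sub>R e)) has_vector_derivative
       (f1 0 *\<^sub>R e + (-(1/2) * Q') *\<^sub>R (x + 0 *\<^sub>R e - y) + (f2 0 *\<^sub>R 0 + ((1/2) * (Q' / q)) *\<^sub>R y))) (at 0)"
      unfolding eq
      by (intro has_vector_derivative_add has_vector_derivative_scaleR h1 h2 hl hy)
    have P: "P = 1 / q" using True q by (simp add: P_def powr_minus_divide)
    have "(f1 0 *\<^sub>R e + (-(1/2) * Q') *\<^sub>R (x + 0 *\<^sub>R e - y) + (f2 0 *\<^sub>R 0 + ((1/2) * (Q' / q)) *\<^sub>R y)) \<bullet> e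
      = -(1/real k) * (q powr (real k/2) - 1) * c - P * (a^2 - q^2 * b^2) / r"
    proof -
      have f10: "f1 0 = - (1/2) * (q - 1)" by (simp add: f1_def q_def)
      have "(f1 0 *\<^sub>R e + (-(1/2) * Q') *\<^sub>R (x + 0 *\<^sub>R e - y) + (f2 0 *\<^sub>R 0 + ((1/2) * (Q' / q)) *\<^sub>R y)) \<bullet> e
         = f1 0 * c + (-(1/2) * Q') * b + ((1/2) * (Q' / q)) * a"
        by (simp add: a_def b_def c_def inner_add_left inner_add_right inner_diff_right inner_commute)
      also have "\<dots> = -(1/real k) * (q powr (real k/2) - 1) * c - P * (a^2 - q^2 * b^2) / r"
        using True q r unfolding P Q'_def f10 by (simp add: field_simps power2_eq_square)
      finally show ?thesis .
    qed
    then show ?thesis using D unfolding q_def r_def a_def b_def c_def P_def by blast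
  next
    case False
    then have k2: "k > 2" using k by simp
    define f1 where "f1 = (\<lambda>t. - (1 / real k) * (Qfun y (x + t *\<^sub>R e) powr (real k / 2) - 1))"
    define f2 where "f2 = (\<lambda>t. (1 / (real k - 2)) * (Qfun y (x + t *\<^sub>R e) powr ((real k - 2) / 2) - 1))"
    have h1: "(f1 has_real_derivative (-(1/real k) * ((real k / 2) * q powr (real k / 2 - 1) * Q'))) (at 0)"
      unfolding f1_def using q Q0 by (auto intro!: derivative_eq_intros DERIV_fun_powr hQ)
    have h2: "(f2 has_real_derivative ((1 / (real k - 2)) * (((real k - 2) / 2) * q powr ((real k - 2) / 2 - 1) * Q'))) (at 0)"
    proof -
      have kk: "real k - 2 \<noteq> 0" using k2 by simp
      have A: "((\<lambda>t. Qfun y (x + t *\<^sub>R e) powr ((real k - 2) / 2)) has_real_derivative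
          ((real k - 2) / 2) * (Qfun y (x + 0 *\<^sub>R e)) powr ((real k - 2) / 2 - of_nat 1) * Q') (at 0)"
        by (rule DERIV_fun_powr[OF hQ]) (simp add: qpos)
      have B: "((\<lambda>t. Qfun y (x + t *\<^sub>R e) powr ((real k - 2) / 2) - 1) has_real_derivative
          ((real k - 2) / 2) * (Qfun y (x + 0 *\<^sub>R e)) powr ((real k - 2) / 2 - of_nat 1) * Q' - 0) (at 0)"
        by (rule DERIV_diff[OF A DERIV_const])
      show ?thesis
        unfolding f2_def using DERIV_cmult[OF B, of "1 / (real k - 2)"] False by (simp add: q_def)
    qed
    have eq: "(\<lambda>t. Wfield k y (x + t *\<^sub>R e)) = (\<lambda>t. f1 t *\<^sub>R (x + t *\<^sub>R e - y) + f2 t *\<^sub>R y)"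
      using False by (simp add: Wfield_def f1_def f2_def fun_eq_iff)
    have D: "((\<lambda>t. Wfield k y (x + t *\<^sub>R e)) has_vector_derivative
       (f1 0 *\<^sub>R e + (-(1/real k) * ((real k / 2) * q powr (real k / 2 - 1) * Q')) *\<^sub>R (x + 0 *\<^sub>R e - y)
         + (f2 0 *\<^sub>R 0 + ((1 / (real k - 2)) * (((real k - 2) / 2) * q powr ((real k - 2) / 2 - 1) * Q')) *\<^sub>R y))) (at 0)"
      unfolding eq
      by (intro has_vector_derivative_add has_vector_derivative_scaleR h1 h2 hl hy)
    have p1: "q powr (real k / 2 - 1) = P * q"
    proof -
      have "q powr (real k / 2 - 1) = q powr ((real k / 2 - 2) + 1)" by simp
      also have "\<dots> = P * q" using q by (simp only: powr_add P_def powr_one_gt_zero_iff powr_one)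
      finally show ?thesis .
    qed
    have p2: "q powr ((real k - 2) / 2 - 1) = P"
      by (simp add: P_def field_simps)
    have "(f1 0 *\<^sub>R e + (-(1/real k) * ((real k / 2) * q powr (real k / 2 - 1) * Q')) *\<^sub>R (x + 0 *\<^sub>R e - y)
         + (f2 0 *\<^sub>R 0 + ((1 / (real k - 2)) * (((real k - 2) / 2) * q powr ((real k - 2) / 2 - 1) * Q')) *\<^sub>R y)) \<bullet> e
      = -(1/real k) * (q powr (real k/2) - 1) * c - P * (a^2 - q^2 * b^2) / r"
    proof -
      have f10: "f1 0 = -(1/real k) * (q powr (real k / 2) - 1)" by (simp add: f1_def q_def)
      have "(f1 0 *\<^sub>R e + (-(1/real k) * ((real k / 2) * q powr (real k / 2 - 1) * Q')) *\<^sub>R (x + 0 *\<^sub>R e - y)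
         + (f2 0 *\<^sub>R 0 + ((1 / (real k - 2)) * (((real k - 2) / 2) * q powr ((real k - 2) / 2 - 1) * Q')) *\<^sub>R y)) \<bullet> e
         = f1 0 * c + (-(1/real k) * ((real k / 2) * q powr (real k / 2 - 1) * Q')) * b
           + ((1 / (real k - 2)) * (((real k - 2) / 2) * q powr ((real k - 2) / 2 - 1) * Q')) * a"
        by (simp add: a_def b_def c_def inner_add_left inner_add_right inner_diff_right inner_commute)
      also have "\<dots> = -(1/real k) * (q powr (real k/2) - 1) * c - P * (a^2 - q^2 * b^2) / r"
        using k2 q r unfolding p1 p2 Q'_def f10 by (simp add: field_simps power2_eq_square)
      finally show ?thesis .
    qed
    then show ?thesis using D unfolding q_def r_def a_def b_def c_def P_def by blast
  qed
qed

theorem lemma2p1: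
  fixes k :: nat and y x :: "'a::euclidean_space" and e :: "nat \<Rightarrow> 'a"
  assumes "2 \<le> k" and "k \<le> DIM('a)"
    and "y \<in> ball 0 1"
    and "x \<in> ball 0 1" and "x \<noteq> y"
    and "\<forall>i<k. \<forall>j<k. e i \<bullet> e j = (if i = j then 1 else 0)"
  shows "(\<forall>i<k. (\<lambda>t. Wfield k y (x + t *\<^sub>R e i)) differentiable (at 0))
    \<and> (\<Sum>i<k. dir_deriv (Wfield k y) x (e i) \<bullet> e i) \<le> 1"
proof -
  define q where "q = Qfun y x"
  define r where "r = (norm (x-y))\<^sup>2"
  define P where "P = q powr (real k/2 - 2)"
  define C where "C = -(1/real k) * (q powr (real k/2) - 1)"
  have r: "r > 0" using assms(5) by (simp add: r_def)
  have nx: "norm x < 1" using assms(4) by simp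
  have num: "1 - 2 * (x \<bullet> y) + (norm y)\<^sup>2 = r + (1 - (norm x)\<^sup>2)"
    unfolding r_def power2_norm_eq_inner
    by (simp add: inner_diff_left inner_diff_right inner_commute)
  have "(norm x)\<^sup>2 < 1" using nx norm_ge_zero[of x]
    by (metis abs_norm_cancel abs_square_less_1)
  then have q: "q > 0" using r unfolding q_def Qfun_def num r_def[symmetric] by simp
  have P: "P > 0" using q by (simp add: P_def)
  have qk: "q powr (real k / 2) = P * q^2"
  proof -
    have "q powr (real k / 2) = q powr ((real k / 2 - 2) + 2)" by simp
    also have "\<dots> = P * q powr 2" by (simp only: powr_add P_def)
    also have "\<dots> = P * q^2" using q by (simp add: powr_numeral)
    finally show ?thesis .
  qed
  have each: "\<forall>i<k. ((\<lambda>t. Wfield k y (x + t *\<^sub>R e i)) has_vector_derivative dir_deriv (Wfield k y) x (e i)) (at 0)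
     \<and> dir_deriv (Wfield k y) x (e i) \<bullet> e i = C - P * ((e i \<bullet> y)^2 - q^2 * ((x-y) \<bullet> e i)^2) / r"
  proof (intro allI impI)
    fix i assume i: "i < k"
    have ee: "e i \<bullet> e i = 1" using assms(6) i by auto
    obtain V where V: "((\<lambda>t. Wfield k y (x + t *\<^sub>R e i)) has_vector_derivative V) (at 0)"
      "V \<bullet> e i = -(1/real k) * (Qfun y x powr (real k/2) - 1) * (e i \<bullet> e i)
      - Qfun y x powr (real k/2 - 2) * ((e i \<bullet> y)^2 - (Qfun y x)^2 * ((x-y) \<bullet> e i)^2) / (norm (x-y))\<^sup>2"
      using W_line[OF assms(1) assms(5), of "e i"] q q_def by blast
    have dd: "dir_deriv (Wfield k y) x (e i) = V"
      unfolding dir_deriv_def by (rule vector_derivative_at[OF V(1)])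
    show "((\<lambda>t. Wfield k y (x + t *\<^sub>R e i)) has_vector_derivative dir_deriv (Wfield k y) x (e i)) (at 0)
     \<and> dir_deriv (Wfield k y) x (e i) \<bullet> e i = C - P * ((e i \<bullet> y)^2 - q^2 * ((x-y) \<bullet> e i)^2) / r"
      using V unfolding dd ee C_def P_def q_def r_def by simp
  qed
  have diff: "\<forall>i<k. (\<lambda>t. Wfield k y (x + t *\<^sub>R e i)) differentiable (at 0)"
    using each differentiableI_vector by blast
  define A where "A = (\<Sum>i<k. (e i \<bullet> y)^2)"
  define B where "B = (\<Sum>i<k. ((x-y) \<bullet> e i)^2)"
  have A: "A \<ge> 0" unfolding A_def by (simp add: sum_nonneg)
  have B: "B \<le> r" unfolding B_def r_def power2_norm_eq_inner by (rule bessel[OF assms(6)])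
  have "(\<Sum>i<k. dir_deriv (Wfield k y) x (e i) \<bullet> e i)
      = (\<Sum>i<k. C - (P / r) * (e i \<bullet> y)^2 + (P * q^2 / r) * ((x-y) \<bullet> e i)^2)"
  proof (rule sum.cong[OF refl])
    fix i assume "i \<in> {..<k}"
    then have "dir_deriv (Wfield k y) x (e i) \<bullet> e i = C - P * ((e i \<bullet> y)^2 - q^2 * ((x-y) \<bullet> e i)^2) / r"
      using each by simp
    then show "dir_deriv (Wfield k y) x (e i) \<bullet> e i = C - (P / r) * (e i \<bullet> y)^2 + (P * q^2 / r) * ((x-y) \<bullet> e i)^2"
      by (simp add: right_diff_distrib diff_divide_distrib algebra_simps)
  qed
  also have "\<dots> = real k * C - (P / r) * A + (P * q^2 / r) * B"
    by (simp add: sum.distrib sum_subtractf sum_distrib_left A_def B_def)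
  also have "\<dots> = - (P * q^2 - 1) - (P / r) * A + (P * q^2 / r) * B"
    using assms(1) by (simp add: C_def qk)
  also have "\<dots> \<le> 1"
  proof -
    have "(P * q^2 / r) * B \<le> (P * q^2 / r) * r"
      using B P r by (intro mult_left_mono) auto
    also have "\<dots> = P * q^2" using r by simp
    finally have 1: "(P * q^2 / r) * B \<le> P * q^2" .
    have 2: "(P / r) * A \<ge> 0" using P r A by simp
    show ?thesis using 1 2 by linarith
  qed
  finally show ?thesis using diff by blast
qed
end
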